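(* Assume $\gamma=0$, $L$ is conformal, and $s$ is not a root of unity. If $M$ is a simple $L$-module with $HM=M$ and $hM=0$, then $\operatorname{ann}M=\langle h\rangle$.
   Context: Let $r,s\in\mathbb C^\times$, $\phi\in\mathbb C[x]$, and $L=L(\phi,r,s,0)$ the associative $\mathbb C$-algebra generated by $u,d,h$ with $hu=ruh$, $dh=rhd$, $du-sud=\phi(h)$. $L$ is conformal if there is $\psi\in\mathbb C[x]$ with $s\psi(x)-\psi(rx)=\phi(x)$; fix such $\psi$ and set $H=ud+\psi(h)$, so $Hu=suH$, $dH=sHd$. Modules are left modules; $\langle\cdots\rangle$ denotes a two-sided ideal. *)

theory Defs
  imports Complex_Main "HOL-Library.Poly_Mapping" "HOL-Computational_Algebra.Polynomial"
begin

datatype gen = Gu | Gd | Gh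

datatype word = Word "gen list"

fun word_list :: "word \<Rightarrow> gen list" where "word_list (Word l) = l"

instantiation word :: monoid_add
begin
definition zero_word :: word where "zero_word = Word []"
definition plus_word :: "word \<Rightarrow> word \<Rightarrow> word"
  where "plus_word a b = Word (word_list a @ word_list b)"
instance
proof
  fix a b c :: word
  show "a + b + c = a + (b + c)" by (cases a; cases b; cases c) (simp add: plus_word_def)
  show "0 + a = a" by (cases a) (simp add: plus_word_def zero_word_def)
  show "a + 0 = a" by (cases a) (simp add: plus_word_def zero_word_def)
qed
end

text \<open>Free associative C-algebra on u, d, h: finitely supported functions words -> C,
  multiplication is convolution over concatenation (a ring_1).\<close>
type_synonym free_alg = "word \<Rightarrow>\<^sub>0 complex"

definition gen_el :: "gen \<Rightarrow> free_alg" where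
  "gen_el g = Poly_Mapping.single (Word [g]) 1"

definition cst :: "complex \<Rightarrow> free_alg" where
  "cst c = Poly_Mapping.single (Word []) c"

abbreviation "uF \<equiv> gen_el Gu"
abbreviation "dF \<equiv> gen_el Gd"
abbreviation "hF \<equiv> gen_el Gh"

definition poly_h :: "complex poly \<Rightarrow> free_alg" where
  "poly_h p = (\<Sum>i\<le>degree p. cst (coeff p i) * hF ^ i)"

text \<open>Defining relations of L = L(phi,r,s,0).\<close>
definition L_rels :: "complex poly \<Rightarrow> complex \<Rightarrow> complex \<Rightarrow> free_alg set" where
  "L_rels \<phi> r s = { hF * uF - cst r * (uF * hF),
                     dF * hF - cst r * (hF * dF),
                     dF * uF - cst s * (uF * dF) - poly_h \<phi> }"

inductive_set ideal_gen :: "'a::ring set \<Rightarrow> 'a set" for S where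
  base: "x \<in> S \<Longrightarrow> x \<in> ideal_gen S"
| zero: "0 \<in> ideal_gen S"
| add: "x \<in> ideal_gen S \<Longrightarrow> y \<in> ideal_gen S \<Longrightarrow> x + y \<in> ideal_gen S"
| lmult: "x \<in> ideal_gen S \<Longrightarrow> a * x \<in> ideal_gen S"
| rmult: "x \<in> ideal_gen S \<Longrightarrow> x * a \<in> ideal_gen S"

definition gen_op :: "('m \<Rightarrow> 'm) \<Rightarrow> ('m \<Rightarrow> 'm) \<Rightarrow> ('m \<Rightarrow> 'm) \<Rightarrow> gen \<Rightarrow> 'm \<Rightarrow> 'm" where
  "gen_op U D Hh g = (case g of Gu \<Rightarrow> U | Gd \<Rightarrow> D | Gh \<Rightarrow> Hh)"

definition word_act :: "('m \<Rightarrow> 'm) \<Rightarrow> ('m \<Rightarrow> 'm) \<Rightarrow> ('m \<Rightarrow> 'm) \<Rightarrow> word \<Rightarrow> 'm \<Rightarrow> 'm" where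
  "word_act U D Hh w = foldr (\<lambda>g f. gen_op U D Hh g \<circ> f) (word_list w) id"

definition act :: "(complex \<Rightarrow> 'm::ab_group_add \<Rightarrow> 'm) \<Rightarrow> ('m \<Rightarrow> 'm) \<Rightarrow> ('m \<Rightarrow> 'm) \<Rightarrow> ('m \<Rightarrow> 'm)
                   \<Rightarrow> free_alg \<Rightarrow> 'm \<Rightarrow> 'm" where
  "act sc U D Hh p m = (\<Sum>w\<in>Poly_Mapping.keys p. sc (Poly_Mapping.lookup p w) (word_act U D Hh w m))"

definition is_L_module :: "complex poly \<Rightarrow> complex \<Rightarrow> complex \<Rightarrow>
    (complex \<Rightarrow> 'm::ab_group_add \<Rightarrow> 'm) \<Rightarrow> ('m \<Rightarrow> 'm) \<Rightarrow> ('m \<Rightarrow> 'm) \<Rightarrow> ('m \<Rightarrow> 'm) \<Rightarrow> bool" where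
  "is_L_module \<phi> r s sc U D Hh \<longleftrightarrow>
     vector_space sc \<and> Vector_Spaces.linear sc sc U \<and> Vector_Spaces.linear sc sc D
     \<and> Vector_Spaces.linear sc sc Hh
     \<and> (\<forall>x\<in>L_rels \<phi> r s. \<forall>m. act sc U D Hh x m = 0)"

definition is_submodule :: "(complex \<Rightarrow> 'm::ab_group_add \<Rightarrow> 'm) \<Rightarrow> ('m \<Rightarrow> 'm) \<Rightarrow> ('m \<Rightarrow> 'm)
    \<Rightarrow> ('m \<Rightarrow> 'm) \<Rightarrow> 'm set \<Rightarrow> bool" where
  "is_submodule sc U D Hh N \<longleftrightarrow> module.subspace sc N \<and> (\<forall>p. \<forall>m\<in>N. act sc U D Hh p m \<in> N)"

definition is_simple_L_module :: "complex poly \<Rightarrow> complex \<Rightarrow> complex \<Rightarrow>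
    (complex \<Rightarrow> 'm::ab_group_add \<Rightarrow> 'm) \<Rightarrow> ('m \<Rightarrow> 'm) \<Rightarrow> ('m \<Rightarrow> 'm) \<Rightarrow> ('m \<Rightarrow> 'm) \<Rightarrow> bool" where
  "is_simple_L_module \<phi> r s sc U D Hh \<longleftrightarrow>
     is_L_module \<phi> r s sc U D Hh \<and> (UNIV :: 'm set) \<noteq> {0}
     \<and> (\<forall>N. is_submodule sc U D Hh N \<longrightarrow> N = {0} \<or> N = UNIV)"

text \<open>Annihilator, pulled back to the free algebra.  Since the annihilator contains the
  defining relations, ann_L M = <h>_L iff its preimage equals the ideal generated by
  h together with the relations.\<close>
definition ann_free :: "(complex \<Rightarrow> 'm::ab_group_add \<Rightarrow> 'm) \<Rightarrow> ('m \<Rightarrow> 'm) \<Rightarrow> ('m \<Rightarrow> 'm)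
    \<Rightarrow> ('m \<Rightarrow> 'm) \<Rightarrow> free_alg set" where
  "ann_free sc U D Hh = {p. \<forall>m. act sc U D Hh p m = 0}"

definition conformal_witness :: "complex poly \<Rightarrow> complex \<Rightarrow> complex \<Rightarrow> complex poly \<Rightarrow> bool" where
  "conformal_witness \<phi> r s \<psi> \<longleftrightarrow> (\<forall>x. s * poly \<psi> x - poly \<psi> (r * x) = poly \<phi> x)"

end

theory Submission
  imports Defs "HOL-Computational_Algebra.Fundamental_Theorem_Algebra"
begin


lemma wordlist_plus[simp]: "word_list (a + b) = word_list a @ word_list b"
  by (simp add: plus_word_def)
lemma wordlist_zero[simp]: "word_list 0 = []"
  by (simp add: zero_word_def)

lemma pm_decomp: "(p::free_alg) = (\<Sum>w\<in>Poly_Mapping.keys p. Poly_Mapping.single w (Poly_Mapping.lookup p w))"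
  by (rule poly_mapping_eqI) (simp add: lookup_sum lookup_single when_def in_keys_iff)

lemma cst_is_single: "cst c = Poly_Mapping.single 0 c"
  by (simp add: cst_def zero_word_def)

lemma cst_add: "cst (a+b) = cst a + cst b" by (simp add: cst_is_single single_add)
lemma cst_mult: "cst (a*b) = cst a * cst b" by (simp add: cst_is_single mult_single)
lemma cst_one[simp]: "cst 1 = 1" by (simp add: cst_is_single)
lemma cst_zero[simp]: "cst 0 = 0" by (simp add: cst_is_single)
lemma cst_diff: "cst (a-b) = cst a - cst b" by (simp add: cst_is_single single_diff)
lemma cst_uminus: "cst (-a) = - cst a" by (simp add: cst_is_single single_uminus)

lemma cst_central_single: "cst c * Poly_Mapping.single w a = Poly_Mapping.single w a * cst c"
  by (simp add: cst_is_single mult_single mult.commute)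

lemma cst_central: "cst c * (x::free_alg) = x * cst c"
proof -
  have "cst c * x = (\<Sum>w\<in>Poly_Mapping.keys x. cst c * Poly_Mapping.single w (Poly_Mapping.lookup x w))"
    by (subst pm_decomp[of x]) (simp add: sum_distrib_left)
  also have "\<dots> = (\<Sum>w\<in>Poly_Mapping.keys x. Poly_Mapping.single w (Poly_Mapping.lookup x w) * cst c)"
    by (simp add: cst_central_single)
  also have "\<dots> = x * cst c"
    by (subst (2) pm_decomp[of x]) (simp add: sum_distrib_right)
  finally show ?thesis .
qed

locale Lact = vector_space sc for sc :: "complex \<Rightarrow> 'm::ab_group_add \<Rightarrow> 'm" (infixr "*s" 75) +
  fixes U D Hh :: "'m \<Rightarrow> 'm"
  assumes lin: "\<And>F x y c. F \<in> {U, D, Hh} \<Longrightarrow> F (x + y) = F x + F y \<and> F (c *s x) = c *s F x"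
begin

lemma gen_add: "gen_op U D Hh g (x + y) = gen_op U D Hh g x + gen_op U D Hh g y"
  using lin by (cases g) (auto simp: gen_op_def)
lemma gen_sc: "gen_op U D Hh g (c *s x) = c *s gen_op U D Hh g x"
  using lin by (cases g) (auto simp: gen_op_def)

lemma wa_cons: "word_act U D Hh (Word (g#l)) m = gen_op U D Hh g (word_act U D Hh (Word l) m)"
  by (simp add: word_act_def)
lemma wa_nil[simp]: "word_act U D Hh (Word []) m = m"
  by (simp add: word_act_def)

lemma wa_lin: "word_act U D Hh w (x + y) = word_act U D Hh w x + word_act U D Hh w y
   \<and> word_act U D Hh w (c *s x) = c *s word_act U D Hh w x"
proof (cases w)
  case (Word l) show ?thesis unfolding Word
    by (induction l) (auto simp: wa_cons gen_add gen_sc)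
qed

lemma foldr_comp_aux: "foldr (\<lambda>g. (\<circ>) (f g)) l a = foldr (\<lambda>g. (\<circ>) (f g)) l id \<circ> a"
  by (induction l) auto

lemma wa_plus: "word_act U D Hh (v + w) m = word_act U D Hh v (word_act U D Hh w m)"
  by (simp add: word_act_def foldr_append foldr_comp_aux[of _ _ "foldr _ (word_list w) id"])

lemma act_sup: "finite S \<Longrightarrow> Poly_Mapping.keys p \<subseteq> S \<Longrightarrow>
   act sc U D Hh p m = (\<Sum>w\<in>S. Poly_Mapping.lookup p w *s word_act U D Hh w m)"
  unfolding act_def
  by (rule sum.mono_neutral_left) (auto simp: in_keys_iff)

lemma act_add: "act sc U D Hh (p + q) m = act sc U D Hh p m + act sc U D Hh q m"
proof -
  let ?S = "Poly_Mapping.keys p \<union> Poly_Mapping.keys q"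
  have "Poly_Mapping.keys (p+q) \<subseteq> ?S" by (rule Poly_Mapping.keys_add)
  then show ?thesis
    by (simp add: act_sup[of ?S] lookup_add scale_left_distrib sum.distrib)
qed

sublocale actadd: additive "\<lambda>p. act sc U D Hh p m"
  by standard (rule act_add)

lemma act_single: "act sc U D Hh (Poly_Mapping.single w a) m = a *s word_act U D Hh w m"
  by (subst act_sup[of "{w}"]) auto

lemma act_lin: "act sc U D Hh p (x + y) = act sc U D Hh p x + act sc U D Hh p y"
  "act sc U D Hh p (c *s x) = c *s act sc U D Hh p x"
  unfolding act_def using wa_lin
  by (auto simp: sum.distrib scale_right_distrib scale_sum_right mult.commute)

sublocale actlin: additive "\<lambda>x. act sc U D Hh p x"
  by standard (rule act_lin)

lemma act_mult: "act sc U D Hh (p * q) m = act sc U D Hh p (act sc U D Hh q m)"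
proof -
  have A: "act sc U D Hh (Poly_Mapping.single v a * Poly_Mapping.single w b) m =
      act sc U D Hh (Poly_Mapping.single v a) (act sc U D Hh (Poly_Mapping.single w b) m)" for v w a b
    by (simp add: mult_single act_single wa_plus wa_lin)
  have B: "act sc U D Hh (Poly_Mapping.single v a * q) m =
      act sc U D Hh (Poly_Mapping.single v a) (act sc U D Hh q m)" for v a
    apply (subst (1 2) pm_decomp[of q])
    apply (simp add: sum_distrib_left actadd.sum actlin.sum A)
    done
  show ?thesis
    apply (subst (1 2) pm_decomp[of p])
    apply (simp add: sum_distrib_right actadd.sum B)
    done
qed

lemma act_cst: "act sc U D Hh (cst c) m = c *s m"
  by (simp add: cst_is_single act_single zero_word_def)
lemma act_one: "act sc U D Hh 1 m = m"
  using act_cst[of 1] by simp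
lemma act_gen: "act sc U D Hh (gen_el g) m = gen_op U D Hh g m"
  by (simp add: gen_el_def act_single wa_cons)
lemma act_pow: "act sc U D Hh (x ^ n) m = (act sc U D Hh x ^^ n) m"
  by (induction n arbitrary: m) (auto simp: act_one act_mult)

end

lemma I_neg: "x \<in> ideal_gen S \<Longrightarrow> - (x::'a::ring_1) \<in> ideal_gen S"
  using ideal_gen.lmult[of x S "-1"] by simp
lemma I_diff: "x \<in> ideal_gen S \<Longrightarrow> y \<in> ideal_gen S \<Longrightarrow> (x::'a::ring_1) - y \<in> ideal_gen S"
  using ideal_gen.add[OF _ I_neg, of x S y] by (simp only: diff_conv_add_uminus)
lemma I_sum: "(\<And>i. i \<in> A \<Longrightarrow> f i \<in> ideal_gen S) \<Longrightarrow> sum f A \<in> ideal_gen S"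
  by (induction A rule: infinite_finite_induct) (auto intro: ideal_gen.zero ideal_gen.add)

section \<open>Free algebra computations\<close>

locale FA =
  fixes \<phi> \<psi> :: "complex poly" and r s :: complex
  assumes s_nz: "s \<noteq> 0"
    and conf0: "s * poly \<psi> 0 - poly \<psi> 0 = poly \<phi> 0"
begin

definition "I = ideal_gen ({hF} \<union> L_rels \<phi> r s)"
definition "HF = uF * dF + cst (poly \<psi> 0)"
definition "Hp p = (\<Sum>j\<le>degree p. cst (coeff p j) * HF ^ j)"

lemma I_add: "x \<in> I \<Longrightarrow> y \<in> I \<Longrightarrow> x + y \<in> I" unfolding I_def by (rule ideal_gen.add)
lemma I_lmult: "x \<in> I \<Longrightarrow> a * x \<in> I" unfolding I_def by (rule ideal_gen.lmult)
lemma I_rmult: "x \<in> I \<Longrightarrow> x * a \<in> I" unfolding I_def by (rule ideal_gen.rmult)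
lemma I_zero: "0 \<in> I" unfolding I_def by (rule ideal_gen.zero)
lemma I_diff': "x \<in> I \<Longrightarrow> y \<in> I \<Longrightarrow> x - y \<in> I" unfolding I_def by (rule I_diff)
lemma I_neg': "x \<in> I \<Longrightarrow> - x \<in> I" unfolding I_def by (rule I_neg)
lemma I_sum': "(\<And>i. i \<in> A \<Longrightarrow> f i \<in> I) \<Longrightarrow> sum f A \<in> I" unfolding I_def by (rule I_sum)
lemma hI: "hF \<in> I" unfolding I_def by (rule ideal_gen.base) simp
lemma R3: "dF*uF - cst s*(uF*dF) - poly_h \<phi> \<in> I" unfolding I_def by (rule ideal_gen.base) (simp add: L_rels_def)

lemma cst_comm: "cst c * x = x * cst c" by (rule cst_central)
lemma cst_comm2: "x * (cst c * y) = cst c * (x * y)"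
  by (metis cst_central mult.assoc)

lemma Pphi: "poly_h \<phi> - cst (poly \<phi> 0) \<in> I"
proof -
  have "poly_h \<phi> - cst (poly \<phi> 0) = (\<Sum>i\<le>degree \<phi>. cst (coeff \<phi> i) * hF ^ i - (if i = 0 then cst (coeff \<phi> 0) else 0))"
    by (simp add: poly_h_def sum_subtractf poly_0_coeff_0)
  also have "\<dots> \<in> I"
  proof (rule I_sum')
    fix i show "cst (coeff \<phi> i) * hF ^ i - (if i = 0 then cst (coeff \<phi> 0) else 0) \<in> I"
    proof (cases i)
      case 0 then show ?thesis by (simp add: I_zero)
    next
      case (Suc k)
      have "hF ^ i \<in> I" unfolding Suc power_Suc by (rule I_rmult[OF hI])
      then show ?thesis using Suc by (simp add: I_lmult)
    qed
  qed
  finally show ?thesis .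
qed

lemma sHF: "cst s * HF - cst (poly \<psi> 0) = cst s * (uF*dF) + cst (poly \<phi> 0)"
proof -
  have "cst s * HF - cst (poly \<psi> 0) = cst s * (uF*dF) + cst (s * poly \<psi> 0 - poly \<psi> 0)"
    by (simp add: HF_def distrib_left cst_mult cst_diff)
  then show ?thesis by (simp add: conf0)
qed

lemma K1: "dF*uF - (cst s * HF - cst (poly \<psi> 0)) \<in> I"
proof -
  have eq: "dF*uF - (cst s * HF - cst (poly \<psi> 0)) = (dF*uF - cst s*(uF*dF) - poly_h \<phi>) + (poly_h \<phi> - cst (poly \<phi> 0))"
    unfolding sHF by (simp add: algebra_simps)
  show ?thesis unfolding eq by (rule I_add[OF R3 Pphi])
qed

lemma K2: "HF * uF - cst s * uF * HF \<in> I"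
proof -
  have e1: "uF * cst s = cst s * uF" "uF * cst (poly \<psi> 0) = cst (poly \<psi> 0) * uF"
    by (simp_all add: cst_comm)
  have "uF * (dF*uF - (cst s * HF - cst (poly \<psi> 0))) = uF*dF*uF - (uF * cst s) * HF + uF * cst (poly \<psi> 0)"
    by (simp add: algebra_simps)
  also have "\<dots> = HF * uF - cst s * uF * HF"
    unfolding e1 by (simp add: HF_def algebra_simps)
  finally have eq: "uF * (dF*uF - (cst s * HF - cst (poly \<psi> 0))) = HF * uF - cst s * uF * HF" .
  show ?thesis unfolding eq[symmetric] by (rule I_lmult[OF K1])
qed

lemma K3: "dF * HF - cst s * HF * dF \<in> I"
proof -
  have e1: "dF * cst (poly \<psi> 0) = cst (poly \<psi> 0) * dF"
    by (simp_all add: cst_comm)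
  have "(dF*uF - (cst s * HF - cst (poly \<psi> 0))) * dF = dF*uF*dF - cst s * HF * dF + cst (poly \<psi> 0) * dF"
    by (simp add: algebra_simps)
  also have "\<dots> = dF * HF - cst s * HF * dF"
    unfolding e1[symmetric] by (simp add: HF_def algebra_simps)
  finally have eq: "(dF*uF - (cst s * HF - cst (poly \<psi> 0))) * dF = dF * HF - cst s * HF * dF" .
  show ?thesis unfolding eq[symmetric] by (rule I_rmult[OF K1])
qed

end

context FA begin

lemma Hp_sup: "degree p \<le> n \<Longrightarrow> Hp p = (\<Sum>j\<le>n. cst (coeff p j) * HF ^ j)"
  unfolding Hp_def
  by (rule sum.mono_neutral_left) (auto simp: coeff_eq_0)

lemma cst_HF: "cst c * (HF * y) = HF * (cst c * y)"
  by (metis cst_central mult.assoc)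

lemma Hp_pCons: "Hp (pCons a p) = cst a + HF * Hp p"
proof -
  have "Hp (pCons a p) = (\<Sum>j\<le>Suc (degree p). cst (coeff (pCons a p) j) * HF ^ j)"
    by (rule Hp_sup) (rule degree_pCons_le)
  also have "\<dots> = cst a + (\<Sum>j\<le>degree p. cst (coeff p j) * (HF * HF ^ j))"
    by (subst sum.atMost_Suc_shift) simp
  also have "\<dots> = cst a + HF * Hp p"
    by (simp add: Hp_def sum_distrib_left cst_HF)
  finally show ?thesis .
qed

lemma Hp_0[simp]: "Hp 0 = 0" by (simp add: Hp_def)
lemma Hp_const: "Hp [:a:] = cst a" by (simp add: Hp_pCons)
lemma Hp_X: "Hp [:a, b:] = cst a + cst b * HF" by (simp add: Hp_pCons cst_comm)

lemma Hp_add: "Hp (p + q) = Hp p + Hp q"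
proof -
  let ?n = "max (degree p) (degree q)"
  have "degree (p+q) \<le> ?n" by (rule degree_add_le) auto
  then show ?thesis
    by (simp add: Hp_sup[of _ ?n] cst_add distrib_right sum.distrib)
qed

lemma Hp_smult: "Hp (smult c p) = cst c * Hp p"
  by (induction p) (simp_all add: Hp_pCons cst_mult distrib_left cst_HF mult.assoc)

lemma Hp_mult: "Hp (p * q) = Hp p * Hp q"
  by (induction p) (simp_all add: Hp_pCons Hp_add Hp_smult distrib_right mult.assoc)

lemma Hp_diff: "Hp (p - q) = Hp p - Hp q"
  using Hp_add[of "p - q" q] by simp

lemma comm_L:
  assumes "x * HF - cst c * HF * x \<in> I"
  shows "x * Hp p - Hp (pcompose p [:0,c:]) * x \<in> I"
proof (induction p)
  case 0 then show ?case by (simp add: I_zero)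
next
  case (pCons a p)
  let ?q = "pcompose p [:0,c:]"
  have "x * Hp (pCons a p) - Hp (pcompose (pCons a p) [:0,c:]) * x
     = (x * cst a - cst a * x) + ((x * HF - cst c * HF * x) * Hp p + cst c * HF * (x * Hp p - Hp ?q * x))"
    by (simp add: Hp_pCons pcompose_pCons Hp_add Hp_mult Hp_const Hp_X Hp_smult cst_HF algebra_simps)
  also have "\<dots> \<in> I"
    by (intro I_add I_lmult I_rmult assms pCons.IH) (simp add: cst_comm I_zero)
  finally show ?case .
qed

lemma comm_R:
  assumes "HF * x - cst c * x * HF \<in> I"
  shows "Hp p * x - x * Hp (pcompose p [:0,c:]) \<in> I"
proof (induction p)
  case 0 then show ?case by (simp add: I_zero)
next
  case (pCons a p)
  let ?q = "pcompose p [:0,c:]"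
  have "Hp (pCons a p) * x - x * Hp (pcompose (pCons a p) [:0,c:])
     = (cst a * x - x * cst a) + (HF * (Hp p * x - x * Hp ?q) + (HF * x - cst c * x * HF) * Hp ?q)"
    by (simp add: Hp_pCons pcompose_pCons Hp_add Hp_mult Hp_const Hp_X Hp_smult cst_HF algebra_simps cst_comm[of c x])
  also have "\<dots> \<in> I"
    by (intro I_add I_lmult I_rmult assms pCons.IH) (simp add: cst_comm I_zero)
  finally show ?case .
qed

end

context FA begin

lemma cst_cst: "cst a * (cst b * y) = cst (a*b) * y"
  by (simp add: cst_mult mult.assoc)

lemmas csimps = algebra_simps cst_cst

lemma I_trans: "x - y \<in> I \<Longrightarrow> y - z \<in> I \<Longrightarrow> x - z \<in> I"
  using I_add[of "x - y" "y - z"] by simp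

lemma uH: "uF * HF - cst (inverse s) * HF * uF \<in> I"
proof -
  have "- (cst (inverse s) * (HF * uF - cst s * uF * HF)) = uF * HF - cst (inverse s) * HF * uF"
    using s_nz by (simp add: csimps)
  then show ?thesis using I_neg'[OF I_lmult[OF K2]] by metis
qed

lemma Hu_pow: "HF * uF ^ i - cst (s ^ i) * uF ^ i * HF \<in> I"
proof (induction i)
  case 0 then show ?case by (simp add: I_zero)
next
  case (Suc i)
  have "HF * uF ^ Suc i - cst (s ^ Suc i) * uF ^ Suc i * HF
     = (HF * uF - cst s * uF * HF) * uF ^ i + cst s * uF * (HF * uF ^ i - cst (s ^ i) * uF ^ i * HF)"
    by (simp add: csimps cst_comm2[of uF])
  also have "\<dots> \<in> I" by (intro I_add I_lmult I_rmult K2 Suc.IH)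
  finally show ?case .
qed

definition "Amon i p = uF ^ i * Hp p"
definition "Bmon i q = Hp q * dF ^ Suc i"

inductive_set NFS where
  z: "0 \<in> NFS"
| a: "Amon i p \<in> NFS"
| b: "Bmon i q \<in> NFS"
| add: "x \<in> NFS \<Longrightarrow> y \<in> NFS \<Longrightarrow> x + y \<in> NFS"

lemma ud_Hp: "uF * dF = Hp [:- poly \<psi> 0, 1:]"
  by (simp add: Hp_X HF_def cst_uminus)

lemma du_Hp: "cst s * HF - cst (poly \<psi> 0) = Hp [:- poly \<psi> 0, s:]"
  by (simp add: Hp_X cst_uminus)

lemma u_A: "\<exists>z\<in>NFS. uF * Amon i p - z \<in> I"
proof (rule bexI[of _ "Amon (Suc i) p"])
  show "uF * Amon i p - Amon (Suc i) p \<in> I" by (simp add: Amon_def mult.assoc I_zero)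
qed (rule NFS.a)

lemma u_B: "\<exists>z\<in>NFS. uF * Bmon i q - z \<in> I"
proof -
  let ?q = "pcompose q [:0, inverse s:]"
  have 1: "uF * Hp q - Hp ?q * uF \<in> I" by (rule comm_L[OF uH])
  have 2: "uF * Bmon i q - Hp ?q * uF * dF ^ Suc i \<in> I"
    using I_rmult[OF 1, of "dF ^ Suc i"] by (simp add: Bmon_def algebra_simps)
  have 3: "Hp ?q * uF * dF ^ Suc i = Hp (?q * [:- poly \<psi> 0, 1:]) * dF ^ i"
    by (simp only: Hp_mult ud_Hp[symmetric] power_Suc mult.assoc)
  show ?thesis
  proof (cases i)
    case 0
    show ?thesis
    proof (rule bexI[of _ "Amon 0 (?q * [:- poly \<psi> 0, 1:])"])
      show "uF * Bmon i q - Amon 0 (?q * [:- poly \<psi> 0, 1:]) \<in> I" using 2 3 0 by (simp add: Amon_def)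
    qed (rule NFS.a)
  next
    case (Suc k)
    show ?thesis
    proof (rule bexI[of _ "Bmon k (?q * [:- poly \<psi> 0, 1:])"])
      show "uF * Bmon i q - Bmon k (?q * [:- poly \<psi> 0, 1:]) \<in> I" using 2 3 Suc by (simp add: Bmon_def)
    qed (rule NFS.b)
  qed
qed

lemma d_A: "\<exists>z\<in>NFS. dF * Amon i p - z \<in> I"
proof (cases i)
  case 0
  let ?p = "pcompose p [:0, s:]"
  have 1: "dF * Hp p - Hp ?p * dF \<in> I" by (rule comm_L[OF K3])
  show ?thesis
  proof (rule bexI[of _ "Bmon 0 ?p"])
    show "dF * Amon i p - Bmon 0 ?p \<in> I" using 1 0 by (simp add: Amon_def Bmon_def)
  qed (rule NFS.b)
next
  case (Suc k)
  let ?r = "pcompose [:- poly \<psi> 0, s:] [:0, s ^ k:]"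
  have 1: "dF * uF * (uF ^ k * Hp p) - Hp [:- poly \<psi> 0, s:] * (uF ^ k * Hp p) \<in> I"
    using I_rmult[OF K1, of "uF ^ k * Hp p"] by (simp add: du_Hp algebra_simps)
  have 2: "Hp [:- poly \<psi> 0, s:] * uF ^ k - uF ^ k * Hp ?r \<in> I"
    by (rule comm_R[OF Hu_pow])
  have 3: "Hp [:- poly \<psi> 0, s:] * (uF ^ k * Hp p) - uF ^ k * Hp (?r * p) \<in> I"
    using I_rmult[OF 2, of "Hp p"] by (simp only: Hp_mult mult.assoc left_diff_distrib)
  show ?thesis
  proof (rule bexI[of _ "Amon k (?r * p)"])
    show "dF * Amon i p - Amon k (?r * p) \<in> I" using I_trans[OF 1 3] Suc by (simp add: Amon_def mult.assoc)
  qed (rule NFS.a)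
qed

lemma d_B: "\<exists>z\<in>NFS. dF * Bmon i q - z \<in> I"
proof -
  let ?q = "pcompose q [:0, s:]"
  have 1: "dF * Hp q - Hp ?q * dF \<in> I" by (rule comm_L[OF K3])
  show ?thesis
  proof (rule bexI[of _ "Bmon (Suc i) ?q"])
    show "dF * Bmon i q - Bmon (Suc i) ?q \<in> I"
    proof -
      have "(dF * Hp q - Hp ?q * dF) * dF ^ Suc i = dF * Bmon i q - Bmon (Suc i) ?q"
        by (simp add: Bmon_def algebra_simps)
      then show ?thesis using I_rmult[OF 1, of "dF ^ Suc i"] by simp
    qed
  qed (rule NFS.b)
qed

lemma gen_NFS: "y \<in> NFS \<Longrightarrow> \<exists>z\<in>NFS. gen_el g * y - z \<in> I"
proof (induction rule: NFS.induct)
  case z then show ?case by (intro bexI[of _ 0]) (auto intro: NFS.z simp: I_zero)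
next
  case (a i p) then show ?case
    apply (cases g)
    using u_A d_A apply auto[2]
    by (rule bexI[of _ 0]) (auto intro: NFS.z I_rmult hI)
next
  case (b i q) then show ?case
    apply (cases g)
    using u_B d_B apply auto[2]
    by (rule bexI[of _ 0]) (auto intro: NFS.z I_rmult hI)
next
  case (add x y)
  then obtain z1 z2 where "z1 \<in> NFS" "z2 \<in> NFS" "gen_el g * x - z1 \<in> I" "gen_el g * y - z2 \<in> I" by blast
  then show ?case
    by (intro bexI[of _ "z1 + z2"]) (auto intro: NFS.add dest: I_add simp: algebra_simps)
qed

lemma cst_NFS: "y \<in> NFS \<Longrightarrow> cst c * y \<in> NFS"
proof (induction rule: NFS.induct)
  case z then show ?case by (simp add: NFS.z)
next
  case (a i p)
  have "cst c * Amon i p = Amon i (smult c p)"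
    by (simp add: Amon_def Hp_smult csimps cst_comm2[of "uF^i"])
  then show ?case by (simp add: NFS.a)
next
  case (b i q)
  have "cst c * Bmon i q = Bmon i (smult c q)"
    by (simp add: Bmon_def Hp_smult mult.assoc)
  then show ?case by (simp add: NFS.b)
next
  case (add x y) then show ?case by (simp add: distrib_left NFS.add)
qed

lemma single_C: "\<exists>z\<in>NFS. Poly_Mapping.single (Word l) a - z \<in> I"
proof (induction l arbitrary: a)
  case Nil
  have "Poly_Mapping.single (Word []) a = Amon 0 [:a:]"
    by (simp add: Amon_def Hp_const cst_def)
  then show ?case by (intro bexI[of _ "Amon 0 [:a:]"]) (auto intro: NFS.a I_zero)
next
  case (Cons g l)
  obtain z where z: "z \<in> NFS" "Poly_Mapping.single (Word l) a - z \<in> I" using Cons by blast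
  obtain z' where z': "z' \<in> NFS" "gen_el g * z - z' \<in> I" using gen_NFS[OF z(1)] by blast
  have e: "Poly_Mapping.single (Word (g#l)) a = gen_el g * Poly_Mapping.single (Word l) a"
    by (simp add: gen_el_def mult_single plus_word_def)
  have "gen_el g * Poly_Mapping.single (Word l) a - gen_el g * z \<in> I"
    using I_lmult[OF z(2), of "gen_el g"] by (simp add: algebra_simps)
  then show ?case unfolding e using z' I_trans by blast
qed

lemma all_C: "\<exists>z\<in>NFS. (p::free_alg) - z \<in> I"
proof -
  have "\<exists>z\<in>NFS. (\<Sum>w\<in>A. Poly_Mapping.single w (Poly_Mapping.lookup p w)) - z \<in> I" for A
  proof (induction A rule: infinite_finite_induct)
    case (infinite A) then show ?case by (intro bexI[of _ 0]) (auto intro: NFS.z I_zero)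
  next
    case empty then show ?case by (intro bexI[of _ 0]) (auto intro: NFS.z I_zero)
  next
    case (insert w A)
    obtain z where z: "z \<in> NFS" "(\<Sum>w\<in>A. Poly_Mapping.single w (Poly_Mapping.lookup p w)) - z \<in> I"
      using insert by blast
    obtain l where l: "w = Word l" by (cases w)
    obtain z' where z': "z' \<in> NFS" "Poly_Mapping.single w (Poly_Mapping.lookup p w) - z' \<in> I"
      using single_C l by blast
    show ?case
    proof (intro bexI[of _ "z' + z"])
    let ?a = "Poly_Mapping.single w (Poly_Mapping.lookup p w)"
    let ?S = "\<Sum>w\<in>A. Poly_Mapping.single w (Poly_Mapping.lookup p w)"
    have eq: "?a + ?S - (z' + z) = (?a - z') + (?S - z)" by (simp add: algebra_simps)
    show "(\<Sum>w\<in>insert w A. Poly_Mapping.single w (Poly_Mapping.lookup p w)) - (z' + z) \<in> I"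
      unfolding sum.insert[OF insert(1,2)] eq by (rule I_add[OF z'(2) z(2)])
  qed (rule NFS.add[OF z'(1) z(1)])
  qed
  then show ?thesis by (subst pm_decomp) blast
qed

end

lemma sum_trunc:
  assumes "N1 \<le> (N::nat)"
  shows "(\<Sum>i<N. (if i < N1 then h i else (0::'a::comm_monoid_add))) = (\<Sum>i<N1. h i)"
proof -
  have "(\<Sum>i<N. (if i < N1 then h i else 0)) = sum h {i \<in> {..<N}. i < N1}"
    by (rule sum.inter_filter[symmetric]) simp
  also have "{i \<in> {..<N}. i < N1} = {..<N1}" using assms by auto
  finally show ?thesis .
qed

context FA begin

lemma Amon_add: "Amon i (p + q) = Amon i p + Amon i q" by (simp add: Amon_def Hp_add distrib_left)
lemma Bmon_add: "Bmon i (p + q) = Bmon i p + Bmon i q" by (simp add: Bmon_def Hp_add distrib_right)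
lemma Amon_0[simp]: "Amon i 0 = 0" by (simp add: Amon_def)
lemma Bmon_0[simp]: "Bmon i 0 = 0" by (simp add: Bmon_def)

lemma Amon_if: "Amon i (if c then p else 0) = (if c then Amon i p else 0)" by simp
lemma Bmon_if: "Bmon i (if c then p else 0) = (if c then Bmon i p else 0)" by simp

lemma NFS_sum: "y \<in> NFS \<Longrightarrow> \<exists>N P Q. y = (\<Sum>i<N. Amon i (P i)) + (\<Sum>i<N. Bmon i (Q i))"
proof (induction rule: NFS.induct)
  case z then show ?case by (intro exI[of _ 0]) simp
next
  case (a i p)
  show ?case
    by (intro exI[of _ "Suc i"] exI[of _ "\<lambda>k. if k = i then p else 0"] exI[of _ "\<lambda>k. 0"])
      (simp add: Amon_if)
next
  case (b i q)
  show ?case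
    by (intro exI[of _ "Suc i"] exI[of _ "\<lambda>k. 0"] exI[of _ "\<lambda>k. if k = i then q else 0"])
      (simp add: Bmon_if)
next
  case (add x y)
  then obtain N1 P1 Q1 N2 P2 Q2 where
    x: "x = (\<Sum>i<N1. Amon i (P1 i)) + (\<Sum>i<N1. Bmon i (Q1 i))" and
    y: "y = (\<Sum>i<N2. Amon i (P2 i)) + (\<Sum>i<N2. Bmon i (Q2 i))" by blast
  let ?N = "max N1 N2"
  let ?P = "\<lambda>i. (if i < N1 then P1 i else 0) + (if i < N2 then P2 i else 0)"
  let ?Q = "\<lambda>i. (if i < N1 then Q1 i else 0) + (if i < N2 then Q2 i else 0)"
  have "(\<Sum>i<?N. Amon i (?P i)) = (\<Sum>i<N1. Amon i (P1 i)) + (\<Sum>i<N2. Amon i (P2 i))"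
    by (simp only: Amon_add Amon_if sum.distrib sum_trunc[OF max.cobounded1] sum_trunc[OF max.cobounded2])
  moreover have "(\<Sum>i<?N. Bmon i (?Q i)) = (\<Sum>i<N1. Bmon i (Q1 i)) + (\<Sum>i<N2. Bmon i (Q2 i))"
    by (simp only: Bmon_add Bmon_if sum.distrib sum_trunc[OF max.cobounded1] sum_trunc[OF max.cobounded2])
  ultimately show ?case
    by (intro exI[of _ ?N] exI[of _ ?P] exI[of _ ?Q]) (simp add: x y algebra_simps)
qed

end



context vector_space begin

lemma vandermonde_vs:
  assumes "finite K" "inj_on c K" "\<forall>n::nat. (\<Sum>k\<in>K. (c k) ^ n *s w k) = 0"
  shows "\<forall>k\<in>K. w k = 0"
  using assms
proof (induction K arbitrary: w rule: finite_induct)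
  case empty then show ?case by simp
next
  case (insert k0 K)
  let ?w = "\<lambda>k. (c k - c k0) *s w k"
  have S: "(c k0)^n *s w k0 + (\<Sum>k\<in>K. (c k) ^ n *s w k) = 0" for n
    using insert(1,2,5) sum.insert[OF insert(1,2), of "\<lambda>k. (c k) ^ n *s w k"] by simp
  have S': "(\<Sum>k\<in>K. (c k) ^ n *s w k) = - ((c k0)^n *s w k0)" for n
    using S[of n] by (metis add.commute eq_neg_iff_add_eq_0)
  have Z: "(\<Sum>k\<in>K. (c k) ^ n *s ?w k) = 0" for n
  proof -
    have t: "(c k) ^ n *s ?w k = (c k) ^ Suc n *s w k - c k0 *s ((c k) ^ n *s w k)" for k
      by (simp add: scale_left_diff_distrib[symmetric] right_diff_distrib mult.commute)
    have "(\<Sum>k\<in>K. (c k) ^ n *s ?w k) = (\<Sum>k\<in>K. (c k) ^ Suc n *s w k) - c k0 *s (\<Sum>k\<in>K. (c k) ^ n *s w k)"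
      by (simp only: t sum_subtractf scale_sum_right)
    also have "\<dots> = - ((c k0)^Suc n *s w k0) - c k0 *s (- ((c k0)^n *s w k0))"
      by (simp only: S')
    also have "\<dots> = 0" by (simp add: mult.commute)
    finally show ?thesis .
  qed
  have ij: "inj_on c K" using insert(4) by auto
  have "\<forall>k\<in>K. ?w k = 0" by (rule insert(3)[OF ij, of ?w]) (use Z in blast)
  moreover have "\<forall>k\<in>K. c k \<noteq> c k0" using insert(2,4) by (auto simp: inj_on_def)
  ultimately have wK: "\<forall>k\<in>K. w k = 0" by auto
  then have "w k0 = 0" using S[of 0] by simp
  with wK show ?case by simp
qed

end

locale QM = vector_space sc for sc :: "complex \<Rightarrow> 'm::ab_group_add \<Rightarrow> 'm" (infixr "*s" 75) +
  fixes U D H :: "'m \<Rightarrow> 'm" and s \<psi>0 :: complex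
  assumes linU: "U (x + y) = U x + U y" "U (c *s x) = c *s U x"
    and linD: "D (x + y) = D x + D y" "D (c *s x) = c *s D x"
    and linH: "H (x + y) = H x + H y" "H (c *s x) = c *s H x"
    and H_inj: "inj H" and H_surj: "surj H"
    and HU: "H (U x) = s *s U (H x)"
    and DH: "D (H x) = s *s H (D x)"
    and DU: "D (U x) = s *s H x - \<psi>0 *s x"
    and UD: "U (D x) = H x - \<psi>0 *s x"
    and s_nz: "s \<noteq> 0"
    and s_nru: "\<forall>n::nat. n > 0 \<longrightarrow> s ^ n \<noteq> 1"
    and nontriv: "\<exists>x::'m. x \<noteq> 0"
begin

lemma pow_lin:
  assumes "\<And>x y. F (x + y) = F x + F y" "\<And>c x. F (c *s x) = c *s F x"
  shows "(F^^n) (x + y) = (F^^n) x + (F^^n) y" "(F^^n) (c *s x) = c *s (F^^n) x"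
  by (induction n) (auto simp: assms)

lemmas Upow = pow_lin[OF linU] and Dpow = pow_lin[OF linD] and Hpow = pow_lin[OF linH]

sublocale Hadd: additive H by standard (rule linH)
declare Hadd.zero[simp]
sublocale Uadd: additive "U^^n" for n by standard (rule Upow)
sublocale Dadd: additive "D^^n" for n by standard (rule Dpow)
sublocale Hnadd: additive "H^^n" for n by standard (rule Hpow)

definition "opH q x = (\<Sum>j\<le>degree q. coeff q j *s (H^^j) x)"

lemma opH_sup: "degree q \<le> n \<Longrightarrow> opH q x = (\<Sum>j\<le>n. coeff q j *s (H^^j) x)"
  unfolding opH_def by (rule sum.mono_neutral_left) (auto simp: coeff_eq_0)

lemma opH_pCons: "opH (pCons a p) x = a *s x + H (opH p x)"
proof -
  have "opH (pCons a p) x = (\<Sum>j\<le>Suc (degree p). coeff (pCons a p) j *s (H^^j) x)"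
    by (rule opH_sup) (rule degree_pCons_le)
  also have "\<dots> = a *s x + (\<Sum>j\<le>degree p. coeff p j *s H ((H^^j) x))"
    by (subst sum.atMost_Suc_shift) simp
  also have "\<dots> = a *s x + H (opH p x)"
    by (simp add: opH_def Hadd.sum linH)
  finally show ?thesis .
qed

lemma opH_0[simp]: "opH 0 x = 0" by (simp add: opH_def)

lemma opH_lin: "opH p (x + y) = opH p x + opH p y" "opH p (c *s x) = c *s opH p x"
  by (induction p) (simp_all add: opH_pCons linH scale_right_distrib)

sublocale opadd: additive "opH p" for p by standard (rule opH_lin)

lemma opH_add: "opH (p + q) x = opH p x + opH q x"
proof (induction p arbitrary: q)
  case 0 then show ?case by simp
next
  case (pCons a p)
  obtain b q' where q: "q = pCons b q'" by (cases q)
  show ?case by (simp add: q opH_pCons linH scale_left_distrib pCons.IH[of q'] Hadd.add algebra_simps)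
qed

lemma opH_smult: "opH (smult c p) x = c *s opH p x"
  by (induction p) (simp_all add: opH_pCons linH scale_right_distrib)

lemma opH_mult: "opH (p * q) x = opH p (opH q x)"
  by (induction p) (simp_all add: opH_pCons opH_add opH_smult)

lemma opH_const: "opH [:a:] x = a *s x" by (simp add: opH_pCons)
lemma opH_lin1: "opH [:a, b:] x = a *s x + b *s H x" by (simp add: opH_pCons linH)

lemma opH_eig: "H w = \<mu> *s w \<Longrightarrow> opH q w = poly q \<mu> *s w"
  by (induction q) (simp_all add: opH_pCons linH scale_left_distrib)

lemma H_opH: "H (opH q x) = opH q (H x)"
  by (induction q) (simp_all add: opH_pCons linH)

lemma Hn_opH: "(H^^n) (opH q x) = opH q ((H^^n) x)"
  by (induction n) (simp_all add: H_opH)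

lemma H_Upow: "H ((U^^k) x) = s^k *s (U^^k) (H x)"
  by (induction k) (simp_all add: HU linU)

lemma HD: "H (D x) = inverse s *s D (H x)"
  using s_nz by (simp add: DH)

lemma H_Dpow: "H ((D^^k) x) = inverse s ^ k *s (D^^k) (H x)"
  by (induction k) (simp_all add: HD linD)

lemma Hn_U: "(H^^n) ((U^^k) x) = (s^k)^n *s (U^^k) ((H^^n) x)"
  by (induction n) (simp_all add: H_Upow linH Upow power_mult_distrib mult.commute flip: funpow_swap1)


lemma Hn_D: "(H^^n) ((D^^k) x) = (inverse s ^ k)^n *s (D^^k) ((H^^n) x)"
  by (induction n) (simp_all add: H_Dpow linH Dpow power_mult_distrib mult.commute flip: funpow_swap1)

lemma eig_U: "H w = \<mu> *s w \<Longrightarrow> H ((U^^k) w) = (s^k * \<mu>) *s (U^^k) w"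
  by (simp add: H_Upow Upow)
lemma eig_D: "H w = \<mu> *s w \<Longrightarrow> H ((D^^k) w) = (inverse s^k * \<mu>) *s (D^^k) w"
  by (simp add: H_Dpow Dpow)

lemma nru_inv: "\<forall>n::nat. n > 0 \<longrightarrow> inverse s ^ n \<noteq> 1"
  using s_nru by (metis inverse_1 power_inverse inverse_inverse_eq)

lemma pow_inj:
  assumes t: "\<forall>n::nat. n > 0 \<longrightarrow> t ^ n \<noteq> 1" "t \<noteq> 0" and l: "(l0::complex) \<noteq> 0"
  shows "inj (\<lambda>k::nat. t^k * l0)"
proof (rule injI)
  have aux: "a < b \<Longrightarrow> t^a * l0 \<noteq> t^b * l0" for a b
  proof
    assume "a < b" "t^a * l0 = t^b * l0"
    then have "t^a = t^b" using l by simp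
    moreover have "t^b = t^a * t^(b-a)" using \<open>a<b\<close> by (simp add: power_add[symmetric])
    ultimately have "t^a * 1 = t^a * t^(b-a)" by simp
    then have "t^(b-a) = 1" using t(2) by simp
    with t(1) \<open>a<b\<close> show False by simp
  qed
  fix a b assume "t^a * l0 = t^b * l0"
  then show "a = b" using aux[of a b] aux[of b a] by (metis linorder_neqE_nat)
qed

lemma Eig: "q \<noteq> 0 \<Longrightarrow> x \<noteq> 0 \<Longrightarrow> opH q x = 0 \<Longrightarrow> \<exists>w \<mu>. w \<noteq> 0 \<and> H w = \<mu> *s w \<and> poly q \<mu> = 0"
proof (induction "degree q" arbitrary: q rule: less_induct)
  case less
  show ?case
  proof (cases "degree q = 0")
    case True
    then obtain a where q: "q = [:a:]" by (metis degree_eq_zeroE)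
    with less show ?thesis by (simp add: opH_const)
  next
    case False
    then obtain z where z: "poly q z = 0"
      using fundamental_theorem_of_algebra[of q] constant_degree[of q] by auto
    then obtain q' where q': "q = [:-z,1:] * q'" using poly_eq_0_iff_dvd by blast
    have q'nz: "q' \<noteq> 0" using less(2) q' by auto
    have dq: "degree q = Suc (degree q')" unfolding q' using q'nz
      by (subst degree_mult_eq) auto
    let ?y = "opH q' x"
    have "opH q x = - z *s ?y + H ?y" unfolding q' by (simp only: opH_mult opH_lin1) simp
    then have Hy: "H ?y = z *s ?y" using less(4) by (metis add.commute eq_neg_iff_add_eq_0 scale_minus_left minus_minus)
    show ?thesis
    proof (cases "?y = 0")
      case True
      obtain w \<mu> where "w \<noteq> 0" "H w = \<mu> *s w" "poly q' \<mu> = 0"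
        using less(1)[of q'] dq q'nz less(3) True by auto
      then show ?thesis by (intro exI[of _ w] exI[of _ \<mu>]) (simp add: q')
    next
      case False
      then show ?thesis using Hy z by blast
    qed
  qed
qed

lemma chain:
  assumes t: "\<forall>n::nat. n > 0 \<longrightarrow> t ^ n \<noteq> 1" "t \<noteq> 0" and l: "(l0::complex) \<noteq> 0"
    and q: "q \<noteq> 0" and roots: "\<And>v \<mu>. v \<noteq> 0 \<Longrightarrow> H v = \<mu> *s v \<Longrightarrow> poly q \<mu> = 0"
    and w: "w \<noteq> 0" and hF: "\<And>k. H ((F^^k) w) = (t^k * l0) *s (F^^k) w"
  shows "\<exists>k. (F^^k) w \<noteq> 0 \<and> F ((F^^k) w) = 0"
proof (rule ccontr)
  assume "\<not> ?thesis"
  then have all: "(F^^k) w \<noteq> 0" for k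
    by (induction k) (use w in auto)
  have "range (\<lambda>k::nat. t^k * l0) \<subseteq> {x. poly q x = 0}"
    using roots[OF all hF] by auto
  moreover have "infinite (range (\<lambda>k::nat. t^k * l0))"
    using pow_inj[OF t l] by (simp add: range_inj_infinite)
  ultimately show False using poly_roots_finite[OF q] finite_subset by blast
qed

lemma base_kill: "(\<forall>x. opH q x = 0) \<Longrightarrow> q = 0"
proof (rule ccontr)
  assume all0: "\<forall>x. opH q x = 0" and q: "q \<noteq> 0"
  obtain x :: 'm where x: "x \<noteq> 0" using nontriv by blast
  obtain w l0 where w: "w \<noteq> 0" "H w = l0 *s w" "poly q l0 = 0" using Eig[OF q x] all0 by blast
  have l: "l0 \<noteq> 0"
  proof
    assume "l0 = 0" then have "H w = H 0" using w by simp
    then have "w = 0" by (rule injD[OF H_inj])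
    then show False using w(1) by simp
  qed
  have roots: "poly q \<mu> = 0" if "v \<noteq> 0" "H v = \<mu> *s v" for v \<mu>
    using opH_eig[OF that(2), of q] all0 that(1) by simp
  have "\<exists>k. (U^^k) w \<noteq> 0 \<and> U ((U^^k) w) = 0"
    by (rule chain[where F=U and t=s and q=q and w=w, OF s_nru s_nz l q])
      (use roots w eig_U[OF w(2)] in auto)
  then obtain k where k: "(U^^k) w \<noteq> 0" "U ((U^^k) w) = 0" by blast
  have "inverse s \<noteq> 0" using s_nz by simp
  have "\<exists>k. (D^^k) w \<noteq> 0 \<and> D ((D^^k) w) = 0"
    by (rule chain[where F=D and t="inverse s" and q=q and w=w, OF nru_inv \<open>inverse s \<noteq> 0\<close> l q])
      (use roots w eig_D[OF w(2)] in auto)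
  then obtain j where j: "(D^^j) w \<noteq> 0" "D ((D^^j) w) = 0" by blast
  have D0: "D 0 = 0" using linD(2)[of 0 0] by simp
  have U0: "U 0 = 0" using linU(2)[of 0 0] by simp
  have "0 = D (U ((U^^k) w))" using k D0 by simp
  also have "\<dots> = (s * (s^k * l0) - \<psi>0) *s (U^^k) w"
    by (simp only: DU eig_U[OF w(2)] scale_left_diff_distrib scale_scale)
  finally have e1: "s * (s^k * l0) = \<psi>0" using k(1) by simp
  have "0 = U (D ((D^^j) w))" using j U0 by simp
  also have "\<dots> = (inverse s^j * l0 - \<psi>0) *s (D^^j) w"
    by (simp only: UD eig_D[OF w(2)] scale_left_diff_distrib)
  finally have e2: "inverse s^j * l0 = \<psi>0" using j(1) by simp
  have sj: "s^j * inverse s^j = 1" by (metis power_mult_distrib right_inverse power_one s_nz)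
  have "s ^ (Suc k + j) * l0 = s^j * (s * (s^k * l0))" by (simp add: power_add mult_ac)
  also have "\<dots> = s^j * (inverse s^j * l0)" using e1 e2 by simp
  also have "\<dots> = l0" using sj by (simp add: mult.assoc[symmetric])
  finally have "s ^ (Suc k + j) * l0 = l0" .
  then have "s ^ (Suc k + j) = 1" using l by simp
  with s_nru show False by auto
qed


lemma opH_lin1_mult: "opH ([:a, b:] * q) x = a *s opH q x + b *s H (opH q x)"
  by (simp only: opH_mult opH_lin1)

lemma lin1_nz: "[:- \<psi>0, s ^ Suc e:] \<noteq> 0" using s_nz by simp

lemma UK: "(\<forall>x. (U^^e) (opH q x) = 0) \<Longrightarrow> q = 0"
proof (induction e arbitrary: q)
  case 0 then show ?case using base_kill by simp
next
  case (Suc e)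
  have "(U^^e) (opH ([:- \<psi>0, s ^ Suc e:] * q) x) = 0" for x
  proof -
    let ?z = "(U^^e) (opH q x)"
    have "U ?z = 0" using Suc.prems by simp
    then have "0 = D (U ?z)" using linD(2)[of 0 0] by simp
    also have "\<dots> = s *s H ?z - \<psi>0 *s ?z" by (rule DU)
    also have "\<dots> = (U^^e) (opH ([:- \<psi>0, s ^ Suc e:] * q) x)"
      by (subst opH_lin1_mult) (simp add: H_Upow Upow Uadd.add Uadd.diff algebra_simps)
    finally show ?thesis by simp
  qed
  then have "[:- \<psi>0, s ^ Suc e:] * q = 0" using Suc.IH by blast
  then show ?case using lin1_nz[of e] by (metis mult_eq_0_iff)
qed

lemma DK: "(\<forall>x. opH q ((D^^e) x) = 0) \<Longrightarrow> q = 0"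
proof (induction e arbitrary: q)
  case 0 then show ?case using base_kill by simp
next
  case (Suc e)
  have "opH (q * [:- \<psi>0, s ^ Suc e:]) ((D^^e) y) = 0" for y
  proof -
    have DeH: "(D^^e) (H y) = s^e *s H ((D^^e) y)"
      using s_nz by (simp add: H_Dpow power_inverse)
    have "0 = opH q ((D^^Suc e) (U y))" using Suc.prems by simp
    also have "(D^^Suc e) (U y) = (D^^e) (D (U y))" by (simp add: funpow_Suc_right del: funpow.simps)
    also have "\<dots> = opH [:- \<psi>0, s ^ Suc e:] ((D^^e) y)"
      by (simp add: DU Dadd.diff Dpow DeH opH_lin1 algebra_simps)
    finally have "opH q (opH [:- \<psi>0, s ^ Suc e:] ((D^^e) y)) = 0" by simp
    then show ?thesis by (simp only: opH_mult)
  qed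
  then have "q * [:- \<psi>0, s ^ Suc e:] = 0" using Suc.IH by blast
  then show ?case using lin1_nz[of e] by (metis mult_eq_0_iff)
qed

lemma surj_Hn: "surj (H^^n)"
proof (induction n)
  case 0 then show ?case by simp
next
  case (Suc n)
  have "H^^Suc n = H^^n \<circ> H" by (simp add: funpow_Suc_right del: funpow.simps)
  then show ?case using comp_surj[OF H_surj Suc.IH] by simp
qed

lemma grading:
  assumes Z: "\<forall>m. (\<Sum>i<N. (U^^i) (opH (P i) m)) + (\<Sum>i<N. opH (Q i) ((D^^Suc i) m)) = 0"
  shows "\<forall>i<N. P i = 0 \<and> Q i = 0"
proof -
  define a where "a x i = (U^^i) (opH (P i) x)" for x i
  define b where "b x i = opH (Q i) ((D^^Suc i) x)" for x i
  have vand: "a x i = 0 \<and> b x i = 0" if "i < N" for x i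
  proof -
    have eqn: "(\<Sum>i<N. (s^i)^n *s a x i) + (\<Sum>i<N. (inverse s ^ Suc i)^n *s b x i) = 0" for n
    proof -
      obtain m where m: "(H^^n) m = x" using surj_Hn[of n] by (metis surjD)
      have "0 = (H^^n) ((\<Sum>i<N. (U^^i) (opH (P i) m)) + (\<Sum>i<N. opH (Q i) ((D^^Suc i) m)))"
        using Z Hnadd.zero by simp
      also have "\<dots> = (\<Sum>i<N. (s^i)^n *s a x i) + (\<Sum>i<N. (inverse s ^ Suc i)^n *s b x i)"
        unfolding a_def b_def
        by (simp add: Hnadd.add Hnadd.sum Hn_U Hn_opH Hn_D opH_lin m del: funpow.simps)
      finally show ?thesis by simp
    qed
    let ?K = "{..<N} <+> {..<N}"
    let ?c = "case_sum (\<lambda>i. s^i) (\<lambda>i. inverse s ^ Suc i)"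
    let ?w = "case_sum (a x) (b x)"
    have inj: "inj_on ?c ?K"
    proof (rule inj_onI)
      fix u v assume "u \<in> ?K" "v \<in> ?K" "?c u = ?c v"
      have i1: "inj (\<lambda>k::nat. s^k * 1)" by (rule pow_inj[OF s_nru s_nz]) simp
      have i2: "inj (\<lambda>k::nat. inverse s^k * 1)" by (rule pow_inj[OF nru_inv]) (use s_nz in simp)+
      have x: "s^i \<noteq> inverse s ^ Suc j" for i j
      proof
        assume "s^i = inverse s ^ Suc j"
        moreover have "inverse s ^ Suc j * s ^ Suc j = 1" by (metis power_mult_distrib left_inverse power_one s_nz)
        ultimately have "s^i * s ^ Suc j = 1" by simp
        then have "s^(i + Suc j) = 1" by (simp add: power_add mult_ac)
        with s_nru show False by auto
      qed
      show "u = v"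
      proof (cases u; cases v)
        fix i j assume "u = Inl i" "v = Inl j"
        then show "u = v" using \<open>?c u = ?c v\<close> injD[OF i1, of i j] by simp
      next
        fix i j assume "u = Inr i" "v = Inr j"
        then show "u = v" using \<open>?c u = ?c v\<close> injD[OF i2, of "Suc i" "Suc j"] by simp
      next
        fix i j assume "u = Inl i" "v = Inr j"
        then show "u = v" using \<open>?c u = ?c v\<close> x[of i j] by simp
      next
        fix i j assume "u = Inr i" "v = Inl j"
        then show "u = v" using \<open>?c u = ?c v\<close> x[of j i] by simp
      qed
    qed
    have W: "\<forall>k\<in>?K. ?w k = 0"
    proof (rule vandermonde_vs[OF _ inj])
      show "finite ?K" by simp
      show "\<forall>n. (\<Sum>k\<in>?K. ?c k ^ n *s ?w k) = 0"
        using eqn by (simp add: sum.Plus comp_def)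
    qed
    have iN: "i \<in> {..<N}" using that by simp
    have "?w (Inl i) = 0" "?w (Inr i) = 0" using bspec[OF W InlI[OF iN]] bspec[OF W InrI[OF iN]] by simp_all
    then show ?thesis by simp
  qed
  show ?thesis
  proof (intro allI impI conjI)
    fix i assume "i < N"
    show "P i = 0" by (rule UK[where e=i]) (use vand[OF \<open>i<N\<close>] in \<open>simp add: a_def\<close>)
    show "Q i = 0" by (rule DK[where e="Suc i"]) (use vand[OF \<open>i<N\<close>] in \<open>simp add: b_def\<close>)
  qed
qed

end



theorem mainTheorem11:
  fixes \<phi> \<psi> :: "complex poly" and r s :: complex
    and sc :: "complex \<Rightarrow> 'm::ab_group_add \<Rightarrow> 'm" and U D Hh :: "'m \<Rightarrow> 'm"
  assumes "r \<noteq> 0" and "s \<noteq> 0"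
    and "conformal_witness \<phi> r s \<psi>"
    and "\<forall>n::nat. n > 0 \<longrightarrow> s ^ n \<noteq> 1"
    and "is_simple_L_module \<phi> r s sc U D Hh"
    and "\<forall>m. \<exists>m'. act sc U D Hh (uF * dF + poly_h \<psi>) m' = m"
    and "\<forall>m. act sc U D Hh hF m = 0"
  shows "ann_free sc U D Hh = ideal_gen ({hF} \<union> L_rels \<phi> r s)"
proof -
  have mod: "is_L_module \<phi> r s sc U D Hh" and ne: "(UNIV::'m set) \<noteq> {0}"
    and simpl: "\<forall>N. is_submodule sc U D Hh N \<longrightarrow> N = {0} \<or> N = UNIV"
    using assms(5) unfolding is_simple_L_module_def by auto
  have vs: "vector_space sc" and lU: "Vector_Spaces.linear sc sc U" and lD: "Vector_Spaces.linear sc sc D" and lH: "Vector_Spaces.linear sc sc Hh"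
    and rels: "\<forall>x\<in>L_rels \<phi> r s. \<forall>m. act sc U D Hh x m = 0"
    using mod unfolding is_L_module_def by auto
  interpret L: Lact sc U D Hh
    using vs lU lD lH by (auto simp: Lact_def Lact_axioms_def Vector_Spaces.linear_iff)
  define \<psi>0 where "\<psi>0 = poly \<psi> 0"
  define \<phi>0 where "\<phi>0 = poly \<phi> 0"
  have conf0: "s * \<psi>0 - \<psi>0 = \<phi>0"
    using assms(3) unfolding conformal_witness_def \<psi>0_def \<phi>0_def by (metis mult_zero_right)
  interpret F: FA \<phi> \<psi> r s
    using assms(2) conf0 by (simp add: FA_def \<psi>0_def \<phi>0_def)
  have uU: "U (x + y) = U x + U y" "U (sc c x) = sc c (U x)" for x y c
    using L.lin[of U] by auto
  have dD: "D (x + y) = D x + D y" "D (sc c x) = sc c (D x)" for x y c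
    using L.lin[of D] by auto
  have actu: "act sc U D Hh uF = U" and actd: "act sc U D Hh dF = D" and acth: "act sc U D Hh hF = Hh"
    by (auto simp: L.act_gen gen_op_def)
  have Hh0: "Hh m = 0" for m using assms(7) acth by metis
  have polyh: "act sc U D Hh (poly_h p) m = sc (poly p 0) m" for p m
  proof -
    have e: "(Hh^^i) m = (if i = 0 then m else 0)" for i
      by (cases i) (simp_all add: Hh0 del: funpow.simps, simp add: Hh0)
    have "act sc U D Hh (poly_h p) m = (\<Sum>i\<le>degree p. sc (coeff p i) ((Hh^^i) m))"
      by (simp add: poly_h_def L.actadd.sum L.act_mult L.act_cst L.act_pow acth)
    also have "\<dots> = (\<Sum>i\<le>degree p. if i = 0 then sc (coeff p i) m else 0)"
      by (rule sum.cong) (auto simp: e)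
    also have "\<dots> = sc (poly p 0) m" by (simp add: poly_0_coeff_0)
    finally show ?thesis .
  qed
  define Hop where "Hop m = U (D m) + sc \<psi>0 m" for m
  have actH: "act sc U D Hh (uF * dF + poly_h \<psi>) m = Hop m" for m
    by (simp add: L.actadd.add L.act_mult actu actd polyh Hop_def \<psi>0_def)
  have actHF: "act sc U D Hh F.HF m = Hop m" for m
    by (simp add: F.HF_def L.actadd.add L.act_mult actu actd L.act_cst Hop_def \<psi>0_def)
  have rel: "D (U m) = sc s (U (D m)) + sc \<phi>0 m" for m
  proof -
    have "act sc U D Hh (dF*uF - cst s*(uF*dF) - poly_h \<phi>) m = 0"
      using rels by (simp add: L_rels_def)
    then have "D (U m) - sc s (U (D m)) - sc \<phi>0 m = 0"
      by (simp add: L.actadd.diff L.act_mult actu actd L.act_cst polyh \<phi>0_def)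
    then show ?thesis by (simp add: algebra_simps)
  qed
  have c0: "sc \<phi>0 z + sc \<psi>0 z = sc (s * \<psi>0) z" for z
  proof -
    have "\<phi>0 + \<psi>0 = s * \<psi>0" using conf0 by (simp add: algebra_simps)
    then show ?thesis by (simp add: L.scale_left_distrib[symmetric])
  qed
  have linH: "Hop (x + y) = Hop x + Hop y" "Hop (sc c x) = sc c (Hop x)" for x y c
    by (simp_all add: Hop_def uU dD L.scale_right_distrib algebra_simps)
  have HU: "Hop (U x) = sc s (U (Hop x))" for x
  proof -
    have "Hop (U x) = sc s (U (U (D x))) + (sc \<phi>0 (U x) + sc \<psi>0 (U x))"
      by (simp add: Hop_def rel uU algebra_simps)
    also have "\<dots> = sc s (U (Hop x))"
      by (simp only: c0) (simp add: Hop_def uU L.scale_right_distrib)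
    finally show ?thesis .
  qed
  have DH: "D (Hop x) = sc s (Hop (D x))" for x
  proof -
    have "D (Hop x) = sc s (U (D (D x))) + (sc \<phi>0 (D x) + sc \<psi>0 (D x))"
      by (simp add: Hop_def rel dD algebra_simps)
    also have "\<dots> = sc s (Hop (D x))"
      by (simp only: c0) (simp add: Hop_def L.scale_right_distrib)
    finally show ?thesis .
  qed
  have UD: "U (D x) = Hop x - sc \<psi>0 x" for x by (simp add: Hop_def)
  have DU: "D (U x) = sc s (Hop x) - sc \<psi>0 x" for x
  proof -
    have "sc s (Hop x) - sc \<psi>0 x = sc s (U (D x)) + (sc (s * \<psi>0) x - sc \<psi>0 x)"
      by (simp add: Hop_def L.scale_right_distrib)
    also have "sc (s * \<psi>0) x - sc \<psi>0 x = sc \<phi>0 x"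
      using conf0 by (simp add: L.scale_left_diff_distrib[symmetric])
    finally show ?thesis by (simp add: rel)
  qed
  have Hsurj: "surj Hop" using assms(6) actH by (metis surjI)
  have Hinj: "inj Hop"
  proof -
    define N where "N = {m. Hop m = 0}"
    have Hop0: "Hop 0 = 0" using linH(2)[of 0 0] by simp
    have U0: "U 0 = 0" using uU(2)[of 0 0] by simp
    have D0: "D 0 = 0" using dD(2)[of 0 0] by simp
    have gN: "gen_op U D Hh g m \<in> N" if "m \<in> N" for g m
    proof (cases g)
      case Gu then show ?thesis using that by (simp add: N_def gen_op_def HU U0)
    next
      case Gd
      have "sc s (Hop (D m)) = 0" using that DH[of m] D0 by (simp add: N_def)
      then show ?thesis using Gd assms(2) by (simp add: N_def gen_op_def)
    next
      case Gh then show ?thesis by (simp add: N_def gen_op_def Hh0 Hop0)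
    qed
    have wN: "word_act U D Hh w m \<in> N" if "m \<in> N" for w m
    proof (cases w)
      case (Word l) show ?thesis unfolding Word
        by (induction l) (simp_all add: that L.wa_cons gN)
    qed
    have sub: "L.subspace N"
      unfolding L.subspace_def N_def by (simp add: Hop0 linH)
    have "is_submodule sc U D Hh N"
      unfolding is_submodule_def
    proof (intro conjI allI ballI)
      show "L.subspace N" by (rule sub)
      fix p m assume "m \<in> N"
      then show "act sc U D Hh p m \<in> N"
        unfolding act_def by (intro L.subspace_sum[OF sub] L.subspace_scale[OF sub] wN)
    qed
    then have "N = {0} \<or> N = UNIV" using simpl by blast
    moreover have "N \<noteq> UNIV"
    proof
      assume "N = UNIV"
      then have H0: "Hop m = 0" for m by (auto simp: N_def)
      have "m = 0" for m :: 'm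
      proof -
        obtain m' where "m = Hop m'" using surjD[OF Hsurj, of m] by blast
        then show ?thesis using H0[of m'] by simp
      qed
      then have "(UNIV::'m set) = {0}" by blast
      then show False using ne by contradiction
    qed
    ultimately have N0: "N = {0}" by simp
    show ?thesis
    proof (rule injI)
      fix x y assume "Hop x = Hop y"
      then have "Hop (x - y) = 0" using linH(1)[of "x - y" y] by simp
      then have "x - y \<in> N" by (simp add: N_def)
      then show "x = y" using N0 by simp
    qed
  qed
  have nontriv: "\<exists>x::'m. x \<noteq> 0" using ne by auto
  interpret Q: QM sc U D Hop s \<psi>0
    using uU dD linH Hinj Hsurj HU DH DU UD assms(2,4) nontriv by (intro QM.intro[OF vs] QM_axioms.intro) auto
  have actHF': "act sc U D Hh F.HF = Hop" using actHF by blast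
  have actHp: "act sc U D Hh (F.Hp q) m = Q.opH q m" for q m
    by (simp add: F.Hp_def Q.opH_def L.actadd.sum L.act_mult L.act_cst L.act_pow actHF')
  have actA: "act sc U D Hh (F.Amon i p) m = (U^^i) (Q.opH p m)" for i p m
    by (simp add: F.Amon_def L.act_mult L.act_pow actu actHp del: funpow.simps)
  have actB: "act sc U D Hh (F.Bmon i q) m = Q.opH q ((D^^Suc i) m)" for i q m
    by (simp only: F.Bmon_def L.act_mult L.act_pow actd actHp)
  have sub1: "x \<in> ann_free sc U D Hh" if "x \<in> ideal_gen ({hF} \<union> L_rels \<phi> r s)" for x
    using that
  proof (induction rule: ideal_gen.induct)
    case (base x) then show ?case using rels assms(7) by (auto simp: ann_free_def)
  next
    case zero then show ?case by (simp add: ann_free_def L.actadd.zero)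
  next
    case (add x y) then show ?case by (simp add: ann_free_def L.actadd.add)
  next
    case (lmult x a) then show ?case by (simp add: ann_free_def L.act_mult L.actlin.zero)
  next
    case (rmult x a) then show ?case by (simp add: ann_free_def L.act_mult)
  qed
  have sub2: "p \<in> ideal_gen ({hF} \<union> L_rels \<phi> r s)" if "p \<in> ann_free sc U D Hh" for p
  proof -
    have p0: "act sc U D Hh p m = 0" for m using that by (simp add: ann_free_def)
    obtain z where z: "z \<in> F.NFS" "p - z \<in> F.I" using F.all_C by blast
    have z0: "act sc U D Hh z m = 0" for m
    proof -
      have "p - z \<in> ann_free sc U D Hh" using sub1 z(2) by (simp add: F.I_def)
      then have "act sc U D Hh (p - z) m = 0" by (simp add: ann_free_def)
      then show ?thesis using p0[of m] by (simp add: L.actadd.diff)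
    qed
    obtain N P Q where zs: "z = (\<Sum>i<N. F.Amon i (P i)) + (\<Sum>i<N. F.Bmon i (Q i))"
      using F.NFS_sum[OF z(1)] by blast
    have "\<forall>m. (\<Sum>i<N. (U^^i) (Q.opH (P i) m)) + (\<Sum>i<N. Q.opH (Q i) ((D^^Suc i) m)) = 0"
      using z0 by (simp add: zs L.actadd.add L.actadd.sum actA actB del: funpow.simps)
    then have PQ: "\<forall>i<N. P i = 0 \<and> Q i = 0" by (rule Q.grading)
    have "z = 0" unfolding zs using PQ by (simp add: sum.neutral)
    then show ?thesis using z(2) by (simp add: F.I_def)
  qed
  show ?thesis using sub1 sub2 by blast
qed


end
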